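(* Suppose the following two conditions hold: (i) $\mathrm{rank}(A_{\mathrm{eq}}) = \mathrm{rank}([A_{\mathrm{eq}} \; b_{\mathrm{eq}}])$, and (ii) $n_u n_L \geq \mathrm{rank}(A_{\mathrm{eq}})$, where $A_{\mathrm{eq}}$ is the block-diagonal matrix with $n_u$ diagonal blocks each equal to $W_{\Gamma_{\mathrm{eq}},L}^T$, and $b_{\mathrm{eq}} = [-(K_{\mathrm{lqr}}^{(1)})^T; \dots; -(K_{\mathrm{lqr}}^{(n_u)})^T]$ stacks the negated transposed rows of $K_{\mathrm{lqr}}$. Then the solution $(\hat{W}_{L+1}^*, \hat{b}_{L+1}^* )$ of the convex optimization problem $$\min_{\hat{W}_{L+1},\hat{b}_{L+1}} \sum_{i,j=1}^{n_u,n_L} (\hat{W}_{L+1}^{(i,j)} - W_{L+1}^{(i,j)})^2 + \sum_{i=1}^{n_u} (\hat{b}_{L+1}^{(i)} - b_{L+1}^{(i)})^2$$ subject to $\hat{W}_{L+1} W_{\Gamma_{\mathrm{eq}},L} = -K_{\mathrm{lqr}}$ and $\hat{W}_{L+1} b_{\Gamma_{\mathrm{eq}},L} + \hat{b}_{L+1} = 0$, provides a weight and bias for the last layer such that the modified network $\mathcal{N}(x;\theta_{\mathrm{lqr}})$, with $\theta_{l,\mathrm{lqr}} = \theta_l$ for $l \in \{1,\dots,L\}$ and last-layer parameters $\{\hat{W}_{L+1}^*, \hat{b}_{L+1}^*\}$, satisfies $\mathcal{N}(x;\theta_{\mathrm{lqr}}) = -K_{\mathrm{lqr}} x$ for all $x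 \in \mathcal{R}_{\mathrm{eq}}$, while minimizing the change in the parameters of the last layer.
   Context: Consider a linear system $x_{k+1} = A x_k + B u_k$ with $x \in \mathbb{R}^{n_x}$, $u \in \mathbb{R}^{n_u}$, equilibrium $x_{\mathrm{eq}} = 0$, and LQR gain $K_{\mathrm{lqr}}$ (optimal unconstrained feedback $u = -K_{\mathrm{lqr}} x$ for cost $\sum x^TQx + u^TRu$). A feed-forward ReLU network controller $\mathcal{N}(x;\theta)$ has $L$ hidden layers, with $n_L$ neurons in the last hidden layer, parameters $\theta_l = \{W_l, b_l\}$, layers $f_l(\xi) = W_l \xi + b_l$, ReLU activations $\max(0,\cdot)$, and a linear output layer $u = W_{L+1}\xi_L + b_{L+1}$. An activation pattern assigns to each hidden neuron a binary value (1 if its pre-activation is $\geq 0$, else 0); $\Gamma_{\mathrm{eq}}$ is the activation pattern at $x_{\mathrm{eq}}$, and $\mathcal{R}_{\mathrm{eq}}$ is the polytopic region of states sharing this activation pattern. On $\mathcal{R}_{\mathrm{eq}}$ the output of the last hidden layer is the affine function $W_{\Gamma_{\mathrm{eq}},L} x + b_{\Gamma_{\mathrm{eq}},L}$ (obtained by composing the hidden layers with the fixed activation pattern), so the network equals $W_{L+1}(W_{\Gamma_{\mathrm{eq}},L}x + b_{\Gamma_{\mathrm{eq}},L}) + b_{L+1}$ there. The regions depend only on the hidden layers, so changing the output layer does not change $\mathcal{R}_{\mathrm{eq}}$. Conditions (i)-(ii) are the solvability conditions of the linear system $A_{\mathrm{eq}} w = b_{\mathrm{eq}}$, with $w$ the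 stacked rows of $\hat{W}_{L+1}$, equivalent to $\hat{W}_{L+1} W_{\Gamma_{\mathrm{eq}},L} = -K_{\mathrm{lqr}}$. *)

theory Defs
  imports "Jordan_Normal_Form.DL_Rank"
begin

type_synonym layer = "real mat \<times> real vec"

definition relu_vec :: "real vec \<Rightarrow> real vec" where
  "relu_vec v = map_vec (\<lambda>t. max 0 t) v"

fun wf_layers :: "nat \<Rightarrow> layer list \<Rightarrow> nat \<Rightarrow> bool" where
  "wf_layers n [] m = (n = m)"
| "wf_layers n ((W, b) # ls) m =
     (W \<in> carrier_mat (dim_row W) n \<and> b \<in> carrier_vec (dim_row W) \<and> wf_layers (dim_row W) ls m)"

fun hidden_out :: "layer list \<Rightarrow> real vec \<Rightarrow> real vec" where
  "hidden_out [] \<xi> = \<xi>"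
| "hidden_out ((W, b) # ls) \<xi> = hidden_out ls (relu_vec (W *\<^sub>v \<xi> + b))"

definition net :: "layer list \<Rightarrow> real mat \<Rightarrow> real vec \<Rightarrow> real vec \<Rightarrow> real vec" where
  "net ls Wo bo x = Wo *\<^sub>v hidden_out ls x + bo"

fun act_pattern :: "layer list \<Rightarrow> real vec \<Rightarrow> bool list list" where
  "act_pattern [] \<xi> = []"
| "act_pattern ((W, b) # ls) \<xi> =
     (let z = W *\<^sub>v \<xi> + b in map (\<lambda>i. z $ i \<ge> 0) [0..<dim_vec z] # act_pattern ls (relu_vec z))"

definition R_eq :: "nat \<Rightarrow> layer list \<Rightarrow> real vec set" where
  "R_eq nx ls = {x \<in> carrier_vec nx. act_pattern ls x = act_pattern ls (0\<^sub>v nx)}"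

definition pattern_diag :: "bool list \<Rightarrow> real mat" where
  "pattern_diag g = mat (length g) (length g) (\<lambda>(i, j). if i = j \<and> g ! i then 1 else 0)"

text \<open>Composition of hidden layers with fixed activation pattern: affine map (M, c), x \<mapsto> M x + c.\<close>
fun aff_pattern :: "layer list \<Rightarrow> bool list list \<Rightarrow> real mat \<times> real vec \<Rightarrow> real mat \<times> real vec" where
  "aff_pattern ((W, b) # ls) (g # gs) (M, c) =
     aff_pattern ls gs (pattern_diag g * (W * M), pattern_diag g *\<^sub>v (W *\<^sub>v c + b))"
| "aff_pattern _ _ Mc = Mc"

definition W_Gamma :: "nat \<Rightarrow> layer list \<Rightarrow> real mat" where
  "W_Gamma nx ls = fst (aff_pattern ls (act_pattern ls (0\<^sub>v nx)) (1\<^sub>m nx, 0\<^sub>v nx))"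

definition b_Gamma :: "nat \<Rightarrow> layer list \<Rightarrow> real vec" where
  "b_Gamma nx ls = snd (aff_pattern ls (act_pattern ls (0\<^sub>v nx)) (1\<^sub>m nx, 0\<^sub>v nx))"

text \<open>A_eq: block-diagonal with nu blocks W_Gamma^T (each nx x nL).\<close>
definition A_eq :: "nat \<Rightarrow> nat \<Rightarrow> nat \<Rightarrow> real mat \<Rightarrow> real mat" where
  "A_eq nu nx nL WG = mat (nu * nx) (nu * nL)
     (\<lambda>(r, c). if r div nx = c div nL then WG $$ (c mod nL, r mod nx) else 0)"

definition b_eq :: "nat \<Rightarrow> nat \<Rightarrow> real mat \<Rightarrow> real vec" where
  "b_eq nu nx K = vec (nu * nx) (\<lambda>r. - K $$ (r div nx, r mod nx))"

definition augment :: "real mat \<Rightarrow> real vec \<Rightarrow> real mat" where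
  "augment A b = mat (dim_row A) (dim_col A + 1)
     (\<lambda>(r, c). if c < dim_col A then A $$ (r, c) else b $ r)"

definition last_layer_cost :: "nat \<Rightarrow> nat \<Rightarrow> real mat \<Rightarrow> real vec \<Rightarrow> real mat \<Rightarrow> real vec \<Rightarrow> real" where
  "last_layer_cost nu nL Wo bo Wh bh =
     (\<Sum>i<nu. \<Sum>j<nL. (Wh $$ (i, j) - Wo $$ (i, j))^2) + (\<Sum>i<nu. (bh $ i - bo $ i)^2)"

definition lqr_feasible :: "nat \<Rightarrow> nat \<Rightarrow> nat \<Rightarrow> layer list \<Rightarrow> real mat \<Rightarrow> real mat \<Rightarrow> real vec \<Rightarrow> bool" where
  "lqr_feasible nu nx nL ls K Wh bh \<longleftrightarrow>
     Wh \<in> carrier_mat nu nL \<and> bh \<in> carrier_vec nu \<and>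
     Wh * W_Gamma nx ls = - K \<and> Wh *\<^sub>v b_Gamma nx ls + bh = 0\<^sub>v nu"

definition lqr_optimal ::
  "nat \<Rightarrow> nat \<Rightarrow> nat \<Rightarrow> layer list \<Rightarrow> real mat \<Rightarrow> real mat \<Rightarrow> real vec \<Rightarrow> real mat \<Rightarrow> real vec \<Rightarrow> bool" where
  "lqr_optimal nu nx nL ls K Wo bo Wh bh \<longleftrightarrow>
     lqr_feasible nu nx nL ls K Wh bh \<and>
     (\<forall>W' b'. lqr_feasible nu nx nL ls K W' b' \<longrightarrow>
        last_layer_cost nu nL Wo bo Wh bh \<le> last_layer_cost nu nL Wo bo W' b')"

end

theory Submission imports Defs "HOL-Analysis.Function_Topology" "HOL-Analysis.Elementary_Metric_Spaces" begin

lemma relu_pd: "relu_vec z = pattern_diag (map (\<lambda>i. z $ i \<ge> 0) [0..<dim_vec z]) *\<^sub>v z"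
proof (rule eq_vecI)
  show "dim_vec (relu_vec z) = dim_vec (pattern_diag (map (\<lambda>i. z $ i \<ge> 0) [0..<dim_vec z]) *\<^sub>v z)"
    by (simp add: relu_vec_def pattern_diag_def)
next
  fix i assume i: "i < dim_vec (pattern_diag (map (\<lambda>i. z $ i \<ge> 0) [0..<dim_vec z]) *\<^sub>v z)"
  hence i': "i < dim_vec z" by (simp add: pattern_diag_def)
  have "(pattern_diag (map (\<lambda>i. z $ i \<ge> 0) [0..<dim_vec z]) *\<^sub>v z) $ i
      = (\<Sum>j\<in>{0..<dim_vec z}. (if i = j \<and> z $ i \<ge> 0 then 1 else 0) * z $ j)"
    using i' by (simp add: pattern_diag_def mult_mat_vec_def scalar_prod_def)
  also have "\<dots> = (if z $ i \<ge> 0 then z $ i else 0)"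
  proof -
    have "(\<Sum>j\<in>{0..<dim_vec z}. (if i = j \<and> z $ i \<ge> 0 then 1 else 0) * z $ j)
       = (\<Sum>j\<in>{0..<dim_vec z}. if j = i then (if z $ i \<ge> 0 then z $ i else 0) else 0)"
      by (rule sum.cong) auto
    also have "\<dots> = (if z $ i \<ge> 0 then z $ i else 0)" using i' by (simp add: sum.delta)
    finally show ?thesis .
  qed
  finally show "relu_vec z $ i = (pattern_diag (map (\<lambda>i. z $ i \<ge> 0) [0..<dim_vec z]) *\<^sub>v z) $ i"
    using i' by (simp add: relu_vec_def max_def)
qed

lemma aff_dims:
  "wf_layers n ls m \<Longrightarrow> dim_vec \<xi> = n \<Longrightarrow> M \<in> carrier_mat n k \<Longrightarrow> c \<in> carrier_vec n \<Longrightarrow>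
   fst (aff_pattern ls (act_pattern ls \<xi>) (M, c)) \<in> carrier_mat m k \<and>
   snd (aff_pattern ls (act_pattern ls \<xi>) (M, c)) \<in> carrier_vec m"
proof (induction ls arbitrary: n \<xi> M c)
  case Nil
  then show ?case by simp
next
  case (Cons l ls)
  obtain W b where l: "l = (W, b)" by fastforce
  let ?z = "W *\<^sub>v \<xi> + b"
  let ?g = "map (\<lambda>i. ?z $ i \<ge> 0) [0..<dim_vec ?z]"
  have W: "W \<in> carrier_mat (dim_row W) n" and b: "b \<in> carrier_vec (dim_row W)"
    and wf: "wf_layers (dim_row W) ls m" using Cons.prems(1) l by auto
  have pd: "pattern_diag ?g \<in> carrier_mat (dim_row W) (dim_row W)"
    using b by (simp add: pattern_diag_def)
  have M': "pattern_diag ?g * (W * M) \<in> carrier_mat (dim_row W) k"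
    by (rule mult_carrier_mat[OF pd mult_carrier_mat[OF W Cons.prems(3)]])
  have c': "pattern_diag ?g *\<^sub>v (W *\<^sub>v c + b) \<in> carrier_vec (dim_row W)"
    by (rule mult_mat_vec_carrier[OF pd add_carrier_vec[OF mult_mat_vec_carrier[OF W Cons.prems(4)] b]])
  have dz: "dim_vec (relu_vec ?z) = dim_row W" using b by (simp add: relu_vec_def)
  show ?case using Cons.IH[OF wf dz M' c'] l by (simp add: Let_def)
qed

lemma hidden_aff:
  "wf_layers n ls m \<Longrightarrow> M \<in> carrier_mat n k \<Longrightarrow> c \<in> carrier_vec n \<Longrightarrow> x \<in> carrier_vec k \<Longrightarrow>
   \<xi> = M *\<^sub>v x + c \<Longrightarrow>
   hidden_out ls \<xi> = fst (aff_pattern ls (act_pattern ls \<xi>) (M, c)) *\<^sub>v x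
                     + snd (aff_pattern ls (act_pattern ls \<xi>) (M, c))"
proof (induction ls arbitrary: n \<xi> M c)
  case Nil
  then show ?case by simp
next
  case (Cons l ls)
  obtain W b where l: "l = (W, b)" by fastforce
  let ?z = "W *\<^sub>v \<xi> + b"
  let ?g = "map (\<lambda>i. ?z $ i \<ge> 0) [0..<dim_vec ?z]"
  have W: "W \<in> carrier_mat (dim_row W) n" and b: "b \<in> carrier_vec (dim_row W)"
    and wf: "wf_layers (dim_row W) ls m" using Cons.prems(1) l by auto
  have M: "M \<in> carrier_mat n k" and c: "c \<in> carrier_vec n" and x: "x \<in> carrier_vec k"
    using Cons.prems by auto
  have pd: "pattern_diag ?g \<in> carrier_mat (dim_row W) (dim_row W)"
    using b by (simp add: pattern_diag_def)
  have WM: "W * M \<in> carrier_mat (dim_row W) k" by (rule mult_carrier_mat[OF W M])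
  have M': "pattern_diag ?g * (W * M) \<in> carrier_mat (dim_row W) k"
    by (rule mult_carrier_mat[OF pd WM])
  have Wc: "W *\<^sub>v c \<in> carrier_vec (dim_row W)" by (rule mult_mat_vec_carrier[OF W c])
  have Wcb: "W *\<^sub>v c + b \<in> carrier_vec (dim_row W)" by (rule add_carrier_vec[OF Wc b])
  have c': "pattern_diag ?g *\<^sub>v (W *\<^sub>v c + b) \<in> carrier_vec (dim_row W)"
    by (rule mult_mat_vec_carrier[OF pd Wcb])
  have Mx: "M *\<^sub>v x \<in> carrier_vec n" by (rule mult_mat_vec_carrier[OF M x])
  have WMx: "(W * M) *\<^sub>v x \<in> carrier_vec (dim_row W)" by (rule mult_mat_vec_carrier[OF WM x])
  have eq: "relu_vec ?z = (pattern_diag ?g * (W * M)) *\<^sub>v x + pattern_diag ?g *\<^sub>v (W *\<^sub>v c + b)"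
  proof -
    have zeq: "?z = (W * M) *\<^sub>v x + (W *\<^sub>v c + b)"
    proof -
      have "?z = W *\<^sub>v (M *\<^sub>v x + c) + b" using Cons.prems(5) by simp
      also have "W *\<^sub>v (M *\<^sub>v x + c) = W *\<^sub>v (M *\<^sub>v x) + W *\<^sub>v c"
        by (rule mult_add_distrib_mat_vec[OF W Mx c])
      also have "W *\<^sub>v (M *\<^sub>v x) = (W * M) *\<^sub>v x" by (rule assoc_mult_mat_vec[OF W M x, symmetric])
      also have "(W * M) *\<^sub>v x + W *\<^sub>v c + b = (W * M) *\<^sub>v x + (W *\<^sub>v c + b)"
        by (rule assoc_add_vec[OF WMx Wc b])
      finally show ?thesis .
    qed
    have "relu_vec ?z = pattern_diag ?g *\<^sub>v ?z" by (rule relu_pd)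
    also have "pattern_diag ?g *\<^sub>v ?z = pattern_diag ?g *\<^sub>v ((W * M) *\<^sub>v x + (W *\<^sub>v c + b))"
      by (simp only: zeq)
    also have "pattern_diag ?g *\<^sub>v ((W * M) *\<^sub>v x + (W *\<^sub>v c + b))
       = pattern_diag ?g *\<^sub>v ((W * M) *\<^sub>v x) + pattern_diag ?g *\<^sub>v (W *\<^sub>v c + b)"
      by (rule mult_add_distrib_mat_vec[OF pd WMx Wcb])
    also have "pattern_diag ?g *\<^sub>v ((W * M) *\<^sub>v x) = (pattern_diag ?g * (W * M)) *\<^sub>v x"
      by (rule assoc_mult_mat_vec[OF pd WM x, symmetric])
    finally show ?thesis .
  qed
  have hs: "hidden_out ((W, b) # ls) \<xi> = hidden_out ls (relu_vec ?z)" by simp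
  show ?case using Cons.IH[OF wf M' c' x eq] l by (simp add: Let_def)
qed

lemma augment_cols:
  assumes "b \<in> carrier_vec (dim_row A)"
  shows "set (cols A) \<subseteq> set (cols (augment A b))" "b \<in> set (cols (augment A b))"
    "augment A b \<in> carrier_mat (dim_row A) (dim_col A + 1)"
proof -
  show "augment A b \<in> carrier_mat (dim_row A) (dim_col A + 1)" by (simp add: augment_def)
  have "col (augment A b) c = col A c" if "c < dim_col A" for c
    using that by (auto simp: augment_def col_def)
  then show "set (cols A) \<subseteq> set (cols (augment A b))"
    by (force simp: cols_def augment_def)
  have "col (augment A b) (dim_col A) = b"
    using assms by (auto simp: augment_def col_def)
  then show "b \<in> set (cols (augment A b))"
    by (force simp: cols_def augment_def)
qed

lemma rank_aug_solvable:
  fixes A :: "real mat"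
  assumes A: "A \<in> carrier_mat n nc" and b: "b \<in> carrier_vec n"
    and r: "vec_space.rank n A = vec_space.rank n (augment A b)"
  shows "\<exists>x\<in>carrier_vec nc. A *\<^sub>v x = b"
proof -
  interpret vec_space "TYPE(real)" n .
  show ?thesis
proof (cases "b \<in> span (set (cols A))")
  case True
  then have "b \<in> col_space A" by (simp add: col_space_def)
  then have "b \<in> {y\<in>carrier_vec (dim_row A). \<exists>x\<in>carrier_vec (dim_col A). A *\<^sub>v x = y}"
    by (simp only: col_space_eq[OF A])
  then obtain x where "x \<in> carrier_vec (dim_col A)" "A *\<^sub>v x = b" by blast
  then show ?thesis using A by (intro bexI[of _ x]) auto
next
  case False
  have colsA: "set (cols A) \<subseteq> carrier_vec n" using A cols_dim by blast
  have li0: "lin_indpt {}"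
    by (metis (no_types) empty_subsetI fin_dim finite_basis_exists subset_li_is_li vec_vs vectorspace.basis_def)
  obtain U where U: "finite U" "maximal U (\<lambda>T. T \<subseteq> set (cols A) \<and> lin_indpt T)"
    using maximal_exists_superset[of "set (cols A)" "(\<lambda>T. T \<subseteq> set (cols A) \<and> lin_indpt T)" "{}"]
    using li0 by auto
  have rA: "rank A = card U" by (rule rank_card_indpt[OF A U(2)])
  have Usub: "U \<subseteq> set (cols A)" and Uli: "lin_indpt U" using U(2) by (auto simp: maximal_def)
  have UC: "U \<subseteq> carrier_vec n" using Usub colsA by auto
  have "span U \<subseteq> span (set (cols A))" by (rule span_is_monotone[OF Usub])
  then have bU: "b \<notin> span U" using False by auto
  have bnU: "b \<notin> U" using bU span_mem[OF UC] by auto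
  have "lin_indpt (U \<union> {b})" using lin_dep_iff_in_span[OF UC Uli _ bnU] b bU by auto
  moreover have "U \<union> {b} \<subseteq> set (cols (augment A b))"
    using augment_cols[of b A] A b Usub by auto
  moreover have Aug: "augment A b \<in> carrier_mat n (nc+1)" using augment_cols(3)[of b A] A b by auto
  ultimately have c1: "card (U \<union> {b}) \<le> rank (augment A b)"
    using rank_ge_card_indpt[OF Aug] by auto
  have c2: "card (U \<union> {b}) = card U + 1" using bnU U(1) by simp
  have c3: "rank (augment A b) = card U" using r rA by simp
  have False using c1 c2 c3 by simp
  then show ?thesis ..
qed

qed

lemma coord_cont[continuous_intros]: "continuous_on S (\<lambda>F. F a :: real)"
  by (rule continuous_on_subset[OF continuous_on_product_coordinates]) simp

lemma mult_mat_entry: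
  assumes "A \<in> carrier_mat nu nL" "B \<in> carrier_mat nL nx" "i < nu" "j < nx"
  shows "(A * B) $$ (i, j) = (\<Sum>k<nL. A $$ (i, k) * B $$ (k, j))"
  using assms by (simp add: scalar_prod_def lessThan_atLeast0 mult.commute)

lemma mult_vec_entry:
  assumes "A \<in> carrier_mat nu nL" "v \<in> carrier_vec nL" "i < nu"
  shows "(A *\<^sub>v v) $ i = (\<Sum>k<nL. A $$ (i, k) * v $ k)"
  using assms by (simp add: scalar_prod_def lessThan_atLeast0 mult.commute)

lemma feas_iff:
  fixes WG K Wh :: "real mat" and bG bh :: "real vec"
  assumes WG: "WG \<in> carrier_mat nL nx" and bG: "bG \<in> carrier_vec nL" and K: "K \<in> carrier_mat nu nx"
    and Wh: "Wh \<in> carrier_mat nu nL" and bh: "bh \<in> carrier_vec nu"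
  shows "(Wh * WG = - K \<and> Wh *\<^sub>v bG + bh = 0\<^sub>v nu) \<longleftrightarrow>
    ((\<forall>i<nu. \<forall>j<nx. (\<Sum>k<nL. Wh $$ (i, k) * WG $$ (k, j)) = - K $$ (i, j)) \<and>
     (\<forall>i<nu. bh $ i = - (\<Sum>k<nL. Wh $$ (i, k) * bG $ k)))"
proof -
  have "Wh * WG = - K \<longleftrightarrow> (\<forall>i<nu. \<forall>j<nx. (\<Sum>k<nL. Wh $$ (i, k) * WG $$ (k, j)) = - K $$ (i, j))"
  proof
    assume "Wh * WG = - K"
    then show "\<forall>i<nu. \<forall>j<nx. (\<Sum>k<nL. Wh $$ (i, k) * WG $$ (k, j)) = - K $$ (i, j)"
      using mult_mat_entry[OF Wh WG] K by (metis carrier_matD index_uminus_mat(1))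
  next
    assume h: "\<forall>i<nu. \<forall>j<nx. (\<Sum>k<nL. Wh $$ (i, k) * WG $$ (k, j)) = - K $$ (i, j)"
    show "Wh * WG = - K"
      by (rule eq_matI) (use h mult_mat_entry[OF Wh WG] K Wh WG in auto)
  qed
  moreover have "Wh *\<^sub>v bG + bh = 0\<^sub>v nu \<longleftrightarrow> (\<forall>i<nu. bh $ i = - (\<Sum>k<nL. Wh $$ (i, k) * bG $ k))"
  proof
    assume h: "Wh *\<^sub>v bG + bh = 0\<^sub>v nu"
    show "\<forall>i<nu. bh $ i = - (\<Sum>k<nL. Wh $$ (i, k) * bG $ k)"
    proof (intro allI impI)
      fix i assume i: "i < nu"
      have "(Wh *\<^sub>v bG + bh) $ i = 0" using h i by simp
      moreover have "(Wh *\<^sub>v bG + bh) $ i = (Wh *\<^sub>v bG) $ i + bh $ i" using i bh Wh by simp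
      ultimately show "bh $ i = - (\<Sum>k<nL. Wh $$ (i, k) * bG $ k)"
        using mult_vec_entry[OF Wh bG i] by linarith
    qed
  next
    assume h: "\<forall>i<nu. bh $ i = - (\<Sum>k<nL. Wh $$ (i, k) * bG $ k)"
    show "Wh *\<^sub>v bG + bh = 0\<^sub>v nu"
      by (rule eq_vecI) (use h mult_vec_entry[OF Wh bG] bh Wh in auto)
  qed
  ultimately show ?thesis by simp
qed

lemma cost_entry_le:
  fixes Wh Wo :: "real mat"
  assumes "i < nu" "j < nL"
  shows "(Wh $$ (i, j) - Wo $$ (i, j))^2 \<le> last_layer_cost nu nL Wo bo Wh bh"
proof -
  have "(Wh $$ (i, j) - Wo $$ (i, j))^2 \<le> (\<Sum>j<nL. (Wh $$ (i, j) - Wo $$ (i, j))^2)"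
    by (rule member_le_sum) (use assms in auto)
  also have "\<dots> \<le> (\<Sum>i<nu. \<Sum>j<nL. (Wh $$ (i, j) - Wo $$ (i, j))^2)"
    by (rule member_le_sum[where f = "\<lambda>i. \<Sum>j<nL. (Wh $$ (i, j) - Wo $$ (i, j))^2"])
       (use assms in \<open>auto intro: sum_nonneg\<close>)
  also have "\<dots> \<le> last_layer_cost nu nL Wo bo Wh bh"
    unfolding last_layer_cost_def by (simp add: sum_nonneg)
  finally show ?thesis .
qed

lemma sum_block:
  fixes g :: "nat \<Rightarrow> real"
  assumes i: "i < nu"
  shows "(\<Sum>c<nu*nL. (if c div nL = i then g c else 0)) = (\<Sum>k<nL. g (i*nL + k))"
proof (cases "nL = 0")
  case True then show ?thesis by simp
next
  case False
  then have nL: "nL > 0" by simp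
  have S: "{c\<in>{..<nu*nL}. c div nL = i} = (\<lambda>k. i*nL+k) ` {..<nL}"
  proof (rule equalityI; rule subsetI)
    fix c assume "c \<in> {c\<in>{..<nu*nL}. c div nL = i}"
    then have c: "c div nL = i" by auto
    have "c = i*nL + c mod nL" using div_mult_mod_eq[of c nL] c by simp
    moreover have "c mod nL < nL" using nL by simp
    ultimately show "c \<in> (\<lambda>k. i*nL+k) ` {..<nL}" by blast
  next
    fix c assume "c \<in> (\<lambda>k. i*nL+k) ` {..<nL}"
    then obtain k where k: "k < nL" and c: "c = i*nL + k" by auto
    have "(i+1)*nL \<le> nu*nL" using i by (intro mult_le_mono1) simp
    then have "c < nu*nL" using k c by simp
    moreover have "c div nL = i" using k c nL by simp
    ultimately show "c \<in> {c\<in>{..<nu*nL}. c div nL = i}" by simp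
  qed
  have "(\<Sum>c<nu*nL. (if c div nL = i then g c else 0)) = (\<Sum>c\<in>{c\<in>{..<nu*nL}. c div nL = i}. g c)"
    by (rule sum.inter_filter[symmetric]) simp
  also have "\<dots> = (\<Sum>c\<in>(\<lambda>k. i*nL+k) ` {..<nL}. g c)" using S by simp
  also have "\<dots> = (\<Sum>k<nL. g (i*nL + k))" by (subst sum.reindex) (auto simp: inj_on_def)
  finally show ?thesis .
qed

lemma sumL1:
  fixes f g h :: "nat \<Rightarrow> nat \<Rightarrow> real"
  shows "(\<Sum>i\<in>A. \<Sum>j\<in>B. (f i j + g i j) / 2 - h i j / 4)
     = ((\<Sum>i\<in>A. \<Sum>j\<in>B. f i j) + (\<Sum>i\<in>A. \<Sum>j\<in>B. g i j)) / 2 - (\<Sum>i\<in>A. \<Sum>j\<in>B. h i j) / 4"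
  by (simp add: sum_subtractf sum.distrib sum_divide_distrib[symmetric])

lemma sumL2:
  fixes f g h :: "nat \<Rightarrow> real"
  shows "(\<Sum>i\<in>A. (f i + g i) / 2 - h i / 4)
     = ((\<Sum>i\<in>A. f i) + (\<Sum>i\<in>A. g i)) / 2 - (\<Sum>i\<in>A. h i) / 4"
  by (simp add: sum_subtractf sum.distrib sum_divide_distrib[symmetric])

lemma mid_unique:
  fixes W1 W2 Wo WG K :: "real mat" and b1 b2 bo bG :: "real vec"
  assumes WG: "WG \<in> carrier_mat nL nx" and bG: "bG \<in> carrier_vec nL" and K: "K \<in> carrier_mat nu nx"
    and W1: "W1 \<in> carrier_mat nu nL" "b1 \<in> carrier_vec nu" "W1 * WG = - K" "W1 *\<^sub>v bG + b1 = 0\<^sub>v nu"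
    and W2: "W2 \<in> carrier_mat nu nL" "b2 \<in> carrier_vec nu" "W2 * WG = - K" "W2 *\<^sub>v bG + b2 = 0\<^sub>v nu"
    and opt1: "\<And>W b. W \<in> carrier_mat nu nL \<Longrightarrow> b \<in> carrier_vec nu \<Longrightarrow> W * WG = - K \<Longrightarrow>
       W *\<^sub>v bG + b = 0\<^sub>v nu \<Longrightarrow> last_layer_cost nu nL Wo bo W1 b1 \<le> last_layer_cost nu nL Wo bo W b"
    and opt2: "\<And>W b. W \<in> carrier_mat nu nL \<Longrightarrow> b \<in> carrier_vec nu \<Longrightarrow> W * WG = - K \<Longrightarrow>
       W *\<^sub>v bG + b = 0\<^sub>v nu \<Longrightarrow> last_layer_cost nu nL Wo bo W2 b2 \<le> last_layer_cost nu nL Wo bo W b"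
  shows "W1 = W2 \<and> b1 = b2"
proof -
  define Wm where "Wm = mat nu nL (\<lambda>(i,j). (W1 $$ (i,j) + W2 $$ (i,j)) / 2)"
  define bm where "bm = vec nu (\<lambda>i. (b1 $ i + b2 $ i) / 2)"
  have Wm: "Wm \<in> carrier_mat nu nL" and bm: "bm \<in> carrier_vec nu" by (auto simp: Wm_def bm_def)
  have e1: "\<forall>i<nu. \<forall>j<nx. (\<Sum>k<nL. W1 $$ (i, k) * WG $$ (k, j)) = - K $$ (i, j)"
           "\<forall>i<nu. b1 $ i = - (\<Sum>k<nL. W1 $$ (i, k) * bG $ k)"
    using feas_iff[OF WG bG K W1(1) W1(2)] W1(3,4) by auto
  have e2: "\<forall>i<nu. \<forall>j<nx. (\<Sum>k<nL. W2 $$ (i, k) * WG $$ (k, j)) = - K $$ (i, j)"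
           "\<forall>i<nu. b2 $ i = - (\<Sum>k<nL. W2 $$ (i, k) * bG $ k)"
    using feas_iff[OF WG bG K W2(1) W2(2)] W2(3,4) by auto
  have "Wm * WG = - K \<and> Wm *\<^sub>v bG + bm = 0\<^sub>v nu"
    unfolding feas_iff[OF WG bG K Wm bm]
  proof (intro conjI allI impI)
    fix i j assume i: "i < nu" and j: "j < nx"
    have "(\<Sum>k<nL. Wm $$ (i, k) * WG $$ (k, j))
        = (\<Sum>k<nL. (W1 $$ (i, k) * WG $$ (k, j) + W2 $$ (i, k) * WG $$ (k, j)) / 2)"
      by (rule sum.cong) (use i in \<open>auto simp: Wm_def field_simps\<close>)
    also have "\<dots> = ((\<Sum>k<nL. W1 $$ (i, k) * WG $$ (k, j)) + (\<Sum>k<nL. W2 $$ (i, k) * WG $$ (k, j))) / 2"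
      by (simp only: sum_divide_distrib[symmetric] sum.distrib)
    finally show "(\<Sum>k<nL. Wm $$ (i, k) * WG $$ (k, j)) = - K $$ (i, j)" using e1 e2 i j by simp
  next
    fix i assume i: "i < nu"
    have "(\<Sum>k<nL. Wm $$ (i, k) * bG $ k)
        = (\<Sum>k<nL. (W1 $$ (i, k) * bG $ k + W2 $$ (i, k) * bG $ k) / 2)"
      by (rule sum.cong) (use i in \<open>auto simp: Wm_def field_simps\<close>)
    also have "\<dots> = ((\<Sum>k<nL. W1 $$ (i, k) * bG $ k) + (\<Sum>k<nL. W2 $$ (i, k) * bG $ k)) / 2"
      by (simp only: sum_divide_distrib[symmetric] sum.distrib)
    finally show "bm $ i = - (\<Sum>k<nL. Wm $$ (i, k) * bG $ k)" using e1 e2 i by (simp add: bm_def)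
  qed
  then have m1: "last_layer_cost nu nL Wo bo W1 b1 \<le> last_layer_cost nu nL Wo bo Wm bm"
    and m2: "last_layer_cost nu nL Wo bo W2 b2 \<le> last_layer_cost nu nL Wo bo Wm bm"
    using opt1[OF Wm bm] opt2[OF Wm bm] by auto
  have c12: "last_layer_cost nu nL Wo bo W1 b1 = last_layer_cost nu nL Wo bo W2 b2"
    using opt1[OF W2] opt2[OF W1] by (simp add: order_antisym)
  define D1 where "D1 = (\<Sum>i<nu. \<Sum>j<nL. (W1 $$ (i, j) - W2 $$ (i, j))^2)"
  define D2 where "D2 = (\<Sum>i<nu. (b1 $ i - b2 $ i)^2)"
  have "last_layer_cost nu nL Wo bo Wm bm =
     (\<Sum>i<nu. \<Sum>j<nL. ((W1 $$ (i, j) - Wo $$ (i, j))^2 + (W2 $$ (i, j) - Wo $$ (i, j))^2) / 2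
          - (W1 $$ (i, j) - W2 $$ (i, j))^2 / 4)
     + (\<Sum>i<nu. ((b1 $ i - bo $ i)^2 + (b2 $ i - bo $ i)^2) / 2 - (b1 $ i - b2 $ i)^2 / 4)"
    unfolding last_layer_cost_def
    by (intro arg_cong2[where f = "(+)"] sum.cong refl)
       (auto simp: Wm_def bm_def power2_eq_square field_simps)
  also have "\<dots> = (last_layer_cost nu nL Wo bo W1 b1 + last_layer_cost nu nL Wo bo W2 b2) / 2
      - (D1 + D2) / 4"
    unfolding last_layer_cost_def D1_def D2_def sumL1 sumL2 by (simp add: field_simps)
  finally have "last_layer_cost nu nL Wo bo Wm bm = (last_layer_cost nu nL Wo bo W1 b1 + last_layer_cost nu nL Wo bo W2 b2) / 2
      - (D1 + D2) / 4" .
  then have m4: "4 * last_layer_cost nu nL Wo bo Wm bm = 2 * last_layer_cost nu nL Wo bo W1 b1 + 2 * last_layer_cost nu nL Wo bo W2 b2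
      - (D1 + D2)" by (simp add: field_simps)
  have D1: "D1 \<ge> 0" and D2: "D2 \<ge> 0" unfolding D1_def D2_def by (auto intro!: sum_nonneg)
  have "D1 = 0" "D2 = 0" using m4 D1 D2 m1 m2 c12 by linarith+
  then have z1: "\<forall>i\<in>{..<nu}. \<forall>j\<in>{..<nL}. (W1 $$ (i, j) - W2 $$ (i, j))^2 = 0"
    and z2: "\<forall>i\<in>{..<nu}. (b1 $ i - b2 $ i)^2 = 0"
    unfolding D1_def D2_def
    by (simp_all add: sum_nonneg_eq_0_iff sum_nonneg)
  have "W1 = W2" by (rule eq_matI) (use z1 W1 W2 in auto)
  moreover have "b1 = b2" by (rule eq_vecI) (use z2 W1 W2 in auto)
  ultimately show ?thesis by simp
qed

theorem theorem2:
  fixes nx nu nL :: nat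
    and ls :: "layer list"
    and Wo :: "real mat" and bo :: "real vec" and K :: "real mat"
  assumes hidden: "wf_layers nx ls nL" and L_pos: "ls \<noteq> []"
    and Wo: "Wo \<in> carrier_mat nu nL" and bo: "bo \<in> carrier_vec nu"
    and K: "K \<in> carrier_mat nu nx"
    and cond_i: "vec_space.rank (nu * nx) (A_eq nu nx nL (W_Gamma nx ls))
                 = vec_space.rank (nu * nx)
                     (augment (A_eq nu nx nL (W_Gamma nx ls)) (b_eq nu nx K))"
    and cond_ii: "nu * nL \<ge> vec_space.rank (nu * nx) (A_eq nu nx nL (W_Gamma nx ls))"
  shows "(\<exists>!(Wh, bh). lqr_optimal nu nx nL ls K Wo bo Wh bh) \<and>
         (\<forall>Wh bh. lqr_optimal nu nx nL ls K Wo bo Wh bh \<longrightarrow>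
            (\<forall>x \<in> R_eq nx ls. net ls Wh bh x = - (K *\<^sub>v x)))"
proof -
  define WG where "WG = W_Gamma nx ls"
  define bG where "bG = b_Gamma nx ls"
  have dims: "WG \<in> carrier_mat nL nx \<and> bG \<in> carrier_vec nL"
    using aff_dims[OF hidden, where \<xi> = "0\<^sub>v nx" and M = "1\<^sub>m nx" and c = "0\<^sub>v nx" and k = nx]
    unfolding WG_def bG_def W_Gamma_def b_Gamma_def by simp
  then have WG: "WG \<in> carrier_mat nL nx" and bG: "bG \<in> carrier_vec nL" by auto
  let ?cost = "last_layer_cost nu nL Wo bo"
  define feas where "feas W b \<longleftrightarrow> W \<in> carrier_mat nu nL \<and> b \<in> carrier_vec nu \<and> W * WG = - K \<and> W *\<^sub>v bG + b = 0\<^sub>v nu" for W b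
  have feas_eq: "lqr_feasible nu nx nL ls K W b \<longleftrightarrow> feas W b" for W b
    unfolding lqr_feasible_def feas_def WG_def bG_def by simp
  have opt_eq: "lqr_optimal nu nx nL ls K Wo bo W b \<longleftrightarrow> feas W b \<and> (\<forall>W' b'. feas W' b' \<longrightarrow> ?cost W b \<le> ?cost W' b')" for W b
    unfolding lqr_optimal_def feas_eq by simp
  have feasE: "feas W b \<longleftrightarrow> W \<in> carrier_mat nu nL \<and> b \<in> carrier_vec nu \<and>
     (\<forall>i<nu. \<forall>j<nx. (\<Sum>k<nL. W $$ (i, k) * WG $$ (k, j)) = - K $$ (i, j)) \<and>
     (\<forall>i<nu. b $ i = - (\<Sum>k<nL. W $$ (i, k) * bG $ k))" for W b
    unfolding feas_def using feas_iff[OF WG bG K, of W b] by blast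

  define A where "A = A_eq nu nx nL WG"
  have A: "A \<in> carrier_mat (nu * nx) (nu * nL)" by (simp add: A_def A_eq_def)
  have beq: "b_eq nu nx K \<in> carrier_vec (nu * nx)" by (simp add: b_eq_def)
  obtain w where w: "w \<in> carrier_vec (nu * nL)" and Aw: "A *\<^sub>v w = b_eq nu nx K"
    using rank_aug_solvable[OF A beq] cond_i unfolding A_def WG_def by blast
  define W0 where "W0 = mat nu nL (\<lambda>(i, j). w $ (i * nL + j))"
  define b0 where "b0 = vec nu (\<lambda>i. - (\<Sum>k<nL. W0 $$ (i, k) * bG $ k))"
  have W0c: "W0 \<in> carrier_mat nu nL" and b0c: "b0 \<in> carrier_vec nu" by (auto simp: W0_def b0_def)
  have feas0: "feas W0 b0"
    unfolding feasE
  proof (intro conjI W0c b0c allI impI)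
    fix i j assume i: "i < nu" and j: "j < nx"
    have ij: "i * nx + j < nu * nx"
    proof -
      have "(i+1)*nx \<le> nu*nx" using i by (intro mult_le_mono1) simp
      then show ?thesis using j by simp
    qed
    have dv: "(i * nx + j) div nx = i" and md: "(i * nx + j) mod nx = j" using j by auto
    have "- K $$ (i, j) = (A *\<^sub>v w) $ (i * nx + j)" using Aw ij dv md by (simp add: b_eq_def)
    also have "\<dots> = (\<Sum>c<nu*nL. A $$ (i * nx + j, c) * w $ c)"
      by (rule mult_vec_entry[OF A w ij])
    also have "\<dots> = (\<Sum>c<nu*nL. (if c div nL = i then WG $$ (c mod nL, j) * w $ c else 0))"
      by (rule sum.cong) (use ij dv md in \<open>auto simp: A_def A_eq_def\<close>)
    also have "\<dots> = (\<Sum>k<nL. WG $$ ((i * nL + k) mod nL, j) * w $ (i * nL + k))"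
      by (rule sum_block[OF i])
    also have "\<dots> = (\<Sum>k<nL. W0 $$ (i, k) * WG $$ (k, j))"
      by (rule sum.cong) (use i in \<open>auto simp: W0_def\<close>)
    finally show "(\<Sum>k<nL. W0 $$ (i, k) * WG $$ (k, j)) = - K $$ (i, j)" by simp
  next
    fix i assume i: "i < nu"
    then show "b0 $ i = - (\<Sum>k<nL. W0 $$ (i, k) * bG $ k)" by (simp add: b0_def)
  qed

  (* existence of a minimiser via compactness *)
  define Fof where "Fof W = (\<lambda>(i, j). if i < nu \<and> j < nL then W $$ (i, j) else (0::real))" for W :: "real mat"
  define Wof where "Wof F = mat nu nL (\<lambda>(i, j). F (i, j))" for F :: "nat \<times> nat \<Rightarrow> real"
  define bof where "bof F = vec nu (\<lambda>i. - (\<Sum>k<nL. F (i, k) * bG $ k))" for F :: "nat \<times> nat \<Rightarrow> real"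
  define cF where "cF F = (\<Sum>i<nu. \<Sum>j<nL. (F (i, j) - Wo $$ (i, j))^2)
      + (\<Sum>i<nu. (- (\<Sum>k<nL. F (i, k) * bG $ k) - bo $ i)^2)" for F :: "nat \<times> nat \<Rightarrow> real"
  define C where "C = {F :: nat \<times> nat \<Rightarrow> real. \<forall>i. i < nu \<longrightarrow> (\<forall>j. j < nx \<longrightarrow>
      (\<Sum>k<nL. F (i, k) * WG $$ (k, j)) = - K $$ (i, j))}"
  define r0 where "r0 = ?cost W0 b0"
  define Bx where "Bx = PiE UNIV (\<lambda>(i, j). if i < nu \<and> j < nL then cball (Wo $$ (i, j)) (sqrt r0) else {0::real})"
  have cF_eq: "cF F = ?cost (Wof F) (bof F)" for F
    unfolding cF_def last_layer_cost_def
    by (intro arg_cong2[where f = "(+)"] sum.cong refl) (auto simp: Wof_def bof_def)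
  have feasC: "F \<in> C \<Longrightarrow> feas (Wof F) (bof F)" for F
    unfolding feasE
  proof (intro conjI allI impI)
    assume F: "F \<in> C"
    show "Wof F \<in> carrier_mat nu nL" "bof F \<in> carrier_vec nu" by (auto simp: Wof_def bof_def)
    fix i j assume i: "i < nu" and j: "j < nx"
    have "(\<Sum>k<nL. Wof F $$ (i, k) * WG $$ (k, j)) = (\<Sum>k<nL. F (i, k) * WG $$ (k, j))"
      by (rule sum.cong) (use i in \<open>auto simp: Wof_def\<close>)
    then show "(\<Sum>k<nL. Wof F $$ (i, k) * WG $$ (k, j)) = - K $$ (i, j)" using F i j by (simp add: C_def)
  next
    fix i assume i: "i < nu"
    have "(\<Sum>k<nL. Wof F $$ (i, k) * bG $ k) = (\<Sum>k<nL. F (i, k) * bG $ k)"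
      by (rule sum.cong) (use i in \<open>auto simp: Wof_def\<close>)
    then show "bof F $ i = - (\<Sum>k<nL. Wof F $$ (i, k) * bG $ k)" using i by (simp add: bof_def)
  qed
  have Fof_props: "Fof W \<in> C \<and> Wof (Fof W) = W \<and> bof (Fof W) = b" if f: "feas W b" for W b
  proof -
    from f have Wc: "W \<in> carrier_mat nu nL" and bc: "b \<in> carrier_vec nu"
      and e1: "\<forall>i<nu. \<forall>j<nx. (\<Sum>k<nL. W $$ (i, k) * WG $$ (k, j)) = - K $$ (i, j)"
      and e2: "\<forall>i<nu. b $ i = - (\<Sum>k<nL. W $$ (i, k) * bG $ k)" unfolding feasE by auto
    have s1: "(\<Sum>k<nL. Fof W (i, k) * v k) = (\<Sum>k<nL. W $$ (i, k) * v k)" if "i < nu" for i and v :: "nat \<Rightarrow> real"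
      by (rule sum.cong) (use that in \<open>auto simp: Fof_def\<close>)
    have "Fof W \<in> C" unfolding C_def using e1 s1 by simp
    moreover have "Wof (Fof W) = W" by (rule eq_matI) (use Wc in \<open>auto simp: Wof_def Fof_def\<close>)
    moreover have "bof (Fof W) = b" by (rule eq_vecI) (use bc e2 s1 in \<open>auto simp: bof_def\<close>)
    ultimately show ?thesis by blast
  qed
  have r0_nonneg: "r0 \<ge> 0" unfolding r0_def last_layer_cost_def by (auto intro!: add_nonneg_nonneg sum_nonneg)
  have inBx: "Fof W \<in> Bx" if "?cost W b \<le> r0" for W b
  proof -
    have "Fof W ij \<in> (\<lambda>(i, j). if i < nu \<and> j < nL then cball (Wo $$ (i, j)) (sqrt r0) else {0::real}) ij" for ij
    proof (cases ij)
      case (Pair i j)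
      show ?thesis
      proof (cases "i < nu \<and> j < nL")
        case True
        then have "(W $$ (i, j) - Wo $$ (i, j))^2 \<le> r0" using cost_entry_le[of i nu j nL W Wo bo b] that by auto
        then have "\<bar>W $$ (i, j) - Wo $$ (i, j)\<bar> \<le> sqrt r0" by (intro real_le_rsqrt) simp
        then show ?thesis using True Pair by (simp add: Fof_def mem_cball dist_real_def abs_minus_commute)
      next
        case False
        then show ?thesis using Pair False by (auto simp: Fof_def)
      qed
    qed
    then show ?thesis unfolding Bx_def by (simp add: PiE_iff)
  qed
  have compBx: "compact Bx"
  proof -
    have "compactin (product_topology (\<lambda>_. euclidean) UNIV) Bx"
      unfolding Bx_def compactin_PiE
      by (auto simp: compactin_euclidean_iff split: prod.splits)
    then show ?thesis by (simp add: euclidean_product_topology compactin_euclidean_iff)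
  qed
  have closC: "closed C"
  proof -
    have "closed {F :: nat \<times> nat \<Rightarrow> real. i < nu \<longrightarrow> (\<forall>j. j < nx \<longrightarrow>
      (\<Sum>k<nL. F (i, k) * WG $$ (k, j)) = - K $$ (i, j))}" for i
    proof (intro closed_Collect_all closed_Collect_imp)
      show "open {x :: nat \<times> nat \<Rightarrow> real. i < nu}" by (cases "i < nu") auto
      fix j
      show "open {x :: nat \<times> nat \<Rightarrow> real. j < nx}" by (cases "j < nx") auto
      show "closed {F :: nat \<times> nat \<Rightarrow> real. (\<Sum>k<nL. F (i, k) * WG $$ (k, j)) = - K $$ (i, j)}"
        by (intro closed_Collect_eq continuous_intros)
    qed
    then have "closed {F :: nat \<times> nat \<Rightarrow> real. \<forall>i. i < nu \<longrightarrow> (\<forall>j. j < nx \<longrightarrow>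
      (\<Sum>k<nL. F (i, k) * WG $$ (k, j)) = - K $$ (i, j))}" by (intro closed_Collect_all)
    then show ?thesis unfolding C_def .
  qed
  have compS: "compact (Bx \<inter> C)" by (rule compact_Int_closed[OF compBx closC])
  have F0: "Fof W0 \<in> Bx \<inter> C" using inBx[of W0 b0] Fof_props[OF feas0] by (simp add: r0_def)
  have contS: "continuous_on (Bx \<inter> C) cF" unfolding cF_def by (intro continuous_intros)
  obtain Fs where Fs: "Fs \<in> Bx \<inter> C" and Fsmin: "\<And>F. F \<in> Bx \<inter> C \<Longrightarrow> cF Fs \<le> cF F"
    using continuous_attains_inf[OF compS _ contS] F0 by blast
  define Ws where "Ws = Wof Fs"
  define bs where "bs = bof Fs"
  have feass: "feas Ws bs" unfolding Ws_def bs_def using feasC Fs by blast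
  have opts: "?cost Ws bs \<le> ?cost W' b'" if f: "feas W' b'" for W' b'
  proof (cases "?cost W' b' \<le> r0")
    case True
    have "Fof W' \<in> Bx \<inter> C" using inBx[OF True] Fof_props[OF f] by blast
    then have "cF Fs \<le> cF (Fof W')" by (rule Fsmin)
    then show ?thesis using Fof_props[OF f] by (simp add: cF_eq Ws_def bs_def)
  next
    case False
    have "cF Fs \<le> cF (Fof W0)" using F0 by (rule Fsmin)
    then have "?cost Ws bs \<le> r0" using Fof_props[OF feas0] by (simp add: cF_eq Ws_def bs_def r0_def)
    then show ?thesis using False by simp
  qed
  have optimal_s: "lqr_optimal nu nx nL ls K Wo bo Ws bs" unfolding opt_eq using feass opts by blast
  have uniq: "W = Ws \<and> b = bs" if "lqr_optimal nu nx nL ls K Wo bo W b" for W b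
  proof -
    from that have f: "feas W b" and o: "\<And>W' b'. feas W' b' \<Longrightarrow> ?cost W b \<le> ?cost W' b'"
      unfolding opt_eq by auto
    show ?thesis
      using f feass unfolding feas_def
      by (intro mid_unique[OF WG bG K, where Wo = Wo and bo = bo])
         (auto intro: o opts simp: feas_def)
  qed
  have part1: "\<exists>!(Wh, bh). lqr_optimal nu nx nL ls K Wo bo Wh bh"
  proof (rule ex1I[where a = "(Ws, bs)"])
    show "case (Ws, bs) of (Wh, bh) \<Rightarrow> lqr_optimal nu nx nL ls K Wo bo Wh bh" using optimal_s by simp
    fix p assume "case p of (Wh, bh) \<Rightarrow> lqr_optimal nu nx nL ls K Wo bo Wh bh"
    then show "p = (Ws, bs)" using uniq by (cases p) auto
  qed
  have part2: "net ls Wh bh x = - (K *\<^sub>v x)"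
    if o: "lqr_optimal nu nx nL ls K Wo bo Wh bh" and x: "x \<in> R_eq nx ls" for Wh bh x
  proof -
    from o have f: "feas Wh bh" unfolding opt_eq by auto
    then have Wh: "Wh \<in> carrier_mat nu nL" and bh: "bh \<in> carrier_vec nu"
      and e1: "Wh * WG = - K" and e2: "Wh *\<^sub>v bG + bh = 0\<^sub>v nu" unfolding feas_def by auto
    from x have xc: "x \<in> carrier_vec nx" and pat: "act_pattern ls x = act_pattern ls (0\<^sub>v nx)"
      unfolding R_eq_def by auto
    have xe: "x = 1\<^sub>m nx *\<^sub>v x + 0\<^sub>v nx" using xc by simp
    have "hidden_out ls x = WG *\<^sub>v x + bG"
      using hidden_aff[OF hidden one_carrier_mat zero_carrier_vec xc xe]
      unfolding pat WG_def bG_def W_Gamma_def b_Gamma_def .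
    then have "net ls Wh bh x = Wh *\<^sub>v (WG *\<^sub>v x + bG) + bh" by (simp add: net_def)
    also have "Wh *\<^sub>v (WG *\<^sub>v x + bG) = Wh *\<^sub>v (WG *\<^sub>v x) + Wh *\<^sub>v bG"
      by (rule mult_add_distrib_mat_vec[OF Wh mult_mat_vec_carrier[OF WG xc] bG])
    also have "Wh *\<^sub>v (WG *\<^sub>v x) = (Wh * WG) *\<^sub>v x" by (rule assoc_mult_mat_vec[OF Wh WG xc, symmetric])
    also have "(Wh * WG) *\<^sub>v x + Wh *\<^sub>v bG + bh = (Wh * WG) *\<^sub>v x + (Wh *\<^sub>v bG + bh)"
      by (rule assoc_add_vec[OF mult_mat_vec_carrier[OF mult_carrier_mat[OF Wh WG] xc] mult_mat_vec_carrier[OF Wh bG] bh])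
    also have "\<dots> = (- K) *\<^sub>v x + 0\<^sub>v nu" unfolding e1 e2 ..
    also have "\<dots> = - (K *\<^sub>v x)" using K xc by simp
    finally show ?thesis .
  qed
  show ?thesis using part1 part2 by blast
qed

end
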